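(* Let $A$ be a finite dimensional Hopf algebra over a field $k$ and let $M,L,N,P$ be Hopf bimodules over $A$. Let $f$ be a $p$-cocycle from $M$ to $L$, $g$ a $q$-cocycle from $L$ to $N$, and $h$ a $0$-cocycle from $N$ to $P$ (i.e. $h\in\mathrm{Hom}_{A-}^{-A}(N,P)$ with $Dh=0$) in the Hopf bimodule cohomology complexes. Then $(f\smile g)\smile h=f\smile(g\smile h)$.
   Context: $A$ is a finite dimensional Hopf algebra over a field $k$, with comultiplication $\Delta(x)=\sum x^{(1)}\otimes x^{(2)}$ and counit $\varepsilon$; $\Delta^{(u)}:A\to A^{\otimes u+1}$ is $\varepsilon$ for $u=-1$, the identity for $u=0$, and the iterated comultiplication otherwise. A Hopf bimodule is an $A$-bimodule and $A$-bicomodule (coactions $m\mapsto\sum m_{(-1)}\otimes m_{(0)}$, $m\mapsto\sum m_{(0)}\otimes m_{(1)}$) whose coactions are bimodule maps. For Hopf bimodules $M,N$, $\mathrm{Hom}_{A-}^{-A}(M\otimes A^{\otimes q},A^{\otimes p}\otimes N)$ denotes left $A$-module, right $A$-comodule maps, where $M\otimes A^{\otimes q}$ has the left action on $M$ and right coaction $m\otimes a_1\otimes\cdots\otimes a_q\mapsto\sum m_{(0)}\otimes a_1^{(1)}\otimes\cdots\otimes a_q^{(1)}\otimes m_{(1)}a_1^{(2)}\cdots a_q^{(2)}$, and $A^{\otimes p}\otimes N$ has diagonal left action and the right coaction of $N$. An $n$-cochain from $M$ to $N$ is an element of $\bigoplus_{t=0}^n\mathrm{Hom}_{A-}^{-A}(M\otimes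 A^{\otimes n-t},A^{\otimes t}\otimes N)$; cocycles are with respect to the total differential $D=d_h+d_c$ with $d_h\alpha(m\otimes a_1\otimes\cdots\otimes a_{q+1})=\alpha(ma_1\otimes\cdots\otimes a_{q+1})+\sum_{i=1}^q(-1)^i\alpha(m\otimes\cdots\otimes a_ia_{i+1}\otimes\cdots)+(-1)^{q+1}\alpha(m\otimes a_1\otimes\cdots\otimes a_q)a_{q+1}$ (diagonal right action on $A^{\otimes p}\otimes N$) and $d_c\alpha=(-1)^q[(\mathrm{id}_A\otimes\alpha)\circ\delta_L+\sum_{i=1}^p(-1)^i\Delta_i\circ\alpha+(-1)^{p+1}(\mathrm{id}_{A^{\otimes p}}\otimes\delta_L^N)\circ\alpha]$ (with $\delta_L(m\otimes a_1\otimes\cdots\otimes a_q)=\sum m_{(-1)}a_1^{(1)}\cdots a_q^{(1)}\otimes m_{(0)}\otimes a_1^{(2)}\otimes\cdots\otimes a_q^{(2)}$ and $\Delta_i$ applying $\Delta$ to the $i$-th factor). Cup product: for $f\in\mathrm{Hom}_{A-}^{-A}(M\otimes A^{\otimes p-s},A^{\otimes s}\otimes L)$ and $g\in\mathrm{Hom}_{A-}^{-A}(L\otimes A^{\otimes q-r},A^{\otimes r}\otimes N)$, with $n=p+q$, $t=s+r$, $(f\smile g)(m\otimes a_1\otimes\cdots\otimes a_{n-t})=\sum(-1)^{s(q-r)}(\mathrm{id}_{A^{\otimes s}}\otimes g)\big[f(m\otimes a_1\otimes\cdots\otimes a_{p-s})\cdot(\Delta^{(s-1)}(a^{(1)}_{p-s+1}\cdots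 a^{(1)}_{n-t})\otimes1)\otimes a^{(2)}_{p-s+1}\otimes\cdots\otimes a^{(2)}_{n-t}\big]$, where the $A^{\otimes s}$ factors are multiplied on the right componentwise; extended bilinearly to cochains. *)

theory Defs
  imports Main "HOL.Vector_Spaces"
begin

text \<open>The finite dimensional Hopf algebra A over the field 'k is given
by a basis b_0, ..., b_(d-1) (d = hdim H) and structure constants:
  b_i b_j = sum_k hmu i j k b_k,  1 = sum_k heta k b_k,
  Delta b_i = sum_(j,k) hcmu i j k b_j (x) b_k,  eps b_i = heps i,  S b_i = sum_l hS i l b_l.
A Hopf bimodule M is a 'k-vector space (type 'm, scalar multiplication hb_sc) with
  hb_la i m = b_i . m,  hb_ra m i = m . b_i,
  delta_L m = sum_i b_i (x) hb_lc m i,  delta_R m = sum_i hb_rc m i (x) b_i.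
An element of A^(x)p (x) N is a function X :: nat list => 'n, meaning
sum_es b_es (x) X es  (es ranging over index lists of length p with entries < d),
where b_es = b_(es!0) (x) ... (x) b_(es!(p-1)).
An n-cochain from M to N is a function phi :: 'm => nat list => nat list => 'n,
where phi m as es (length as + length es = n) is the coefficient of b_es in
phi(m (x) b_as); its component in Hom(M (x) A^(x)(n-t), A^(x)t (x) N) is the part with
length es = t.\<close>

record 'k hopf =
  hdim :: nat
  hmu :: "nat \<Rightarrow> nat \<Rightarrow> nat \<Rightarrow> 'k"
  heta :: "nat \<Rightarrow> 'k"
  hcmu :: "nat \<Rightarrow> nat \<Rightarrow> nat \<Rightarrow> 'k"
  heps :: "nat \<Rightarrow> 'k"
  hS :: "nat \<Rightarrow> nat \<Rightarrow> 'k"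

record ('k, 'm) hbimod =
  hb_sc :: "'k \<Rightarrow> 'm \<Rightarrow> 'm"
  hb_la :: "nat \<Rightarrow> 'm \<Rightarrow> 'm"
  hb_ra :: "'m \<Rightarrow> nat \<Rightarrow> 'm"
  hb_lc :: "'m \<Rightarrow> nat \<Rightarrow> 'm"
  hb_rc :: "'m \<Rightarrow> nat \<Rightarrow> 'm"

definition kdelta :: "nat \<Rightarrow> nat \<Rightarrow> 'k::field" where
  "kdelta i j = (if i = j then 1 else 0)"

definition is_hopf :: "'k::field hopf \<Rightarrow> bool" where
  "is_hopf H \<longleftrightarrow>
    (let d = hdim H; \<mu> = hmu H; \<eta> = heta H; \<Delta> = hcmu H; \<epsilon> = heps H; S = hS H in
     (\<forall>i<d. \<forall>j<d. \<forall>l<d. \<forall>t<d. (\<Sum>k<d. \<mu> i j k * \<mu> k l t) = (\<Sum>k<d. \<mu> j l k * \<mu> i k t))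
   \<and> (\<forall>i<d. \<forall>t<d. (\<Sum>k<d. \<eta> k * \<mu> k i t) = kdelta i t \<and> (\<Sum>k<d. \<eta> k * \<mu> i k t) = kdelta i t)
   \<and> (\<forall>i<d. \<forall>a<d. \<forall>b<d. \<forall>c<d. (\<Sum>j<d. \<Delta> i j c * \<Delta> j a b) = (\<Sum>k<d. \<Delta> i a k * \<Delta> k b c))
   \<and> (\<forall>i<d. \<forall>j<d. (\<Sum>k<d. \<Delta> i k j * \<epsilon> k) = kdelta i j \<and> (\<Sum>k<d. \<Delta> i j k * \<epsilon> k) = kdelta i j)
   \<and> (\<forall>i<d. \<forall>j<d. \<forall>a<d. \<forall>b<d. (\<Sum>k<d. \<mu> i j k * \<Delta> k a b) =
        (\<Sum>a1<d. \<Sum>b1<d. \<Sum>a2<d. \<Sum>b2<d. \<Delta> i a1 b1 * \<Delta> j a2 b2 * \<mu> a1 a2 a * \<mu> b1 b2 b))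
   \<and> (\<forall>a<d. \<forall>b<d. (\<Sum>k<d. \<eta> k * \<Delta> k a b) = \<eta> a * \<eta> b)
   \<and> (\<forall>i<d. \<forall>j<d. (\<Sum>k<d. \<mu> i j k * \<epsilon> k) = \<epsilon> i * \<epsilon> j)
   \<and> (\<Sum>k<d. \<eta> k * \<epsilon> k) = 1
   \<and> (\<forall>i<d. \<forall>t<d. (\<Sum>j<d. \<Sum>k<d. \<Sum>l<d. \<Delta> i j k * S j l * \<mu> l k t) = \<epsilon> i * \<eta> t
                 \<and> (\<Sum>j<d. \<Sum>k<d. \<Sum>l<d. \<Delta> i j k * S k l * \<mu> j l t) = \<epsilon> i * \<eta> t))"

definition klin :: "('k \<Rightarrow> 'a::ab_group_add \<Rightarrow> 'a) \<Rightarrow> ('k \<Rightarrow> 'b::ab_group_add \<Rightarrow> 'b) \<Rightarrow> ('a \<Rightarrow> 'b) \<Rightarrow> bool" where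
  "klin sa sb F \<longleftrightarrow> (\<forall>x y. F (x + y) = F x + F y) \<and> (\<forall>c x. F (sa c x) = sb c (F x))"

definition is_hbimod :: "'k::field hopf \<Rightarrow> ('k, 'm::ab_group_add) hbimod \<Rightarrow> bool" where
  "is_hbimod H M \<longleftrightarrow>
    (let d = hdim H; \<mu> = hmu H; \<eta> = heta H; \<Delta> = hcmu H; \<epsilon> = heps H;
         sc = hb_sc M; la = hb_la M; ra = hb_ra M; lc = hb_lc M; rc = hb_rc M in
     vector_space sc
   \<and> (\<forall>i<d. klin sc sc (la i) \<and> klin sc sc (\<lambda>m. ra m i) \<and> klin sc sc (\<lambda>m. lc m i) \<and> klin sc sc (\<lambda>m. rc m i))
   \<comment> \<open>bimodule\<close>
   \<and> (\<forall>i<d. \<forall>j<d. \<forall>m. la i (la j m) = (\<Sum>k<d. sc (\<mu> i j k) (la k m)))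
   \<and> (\<forall>m. (\<Sum>k<d. sc (\<eta> k) (la k m)) = m)
   \<and> (\<forall>i<d. \<forall>j<d. \<forall>m. ra (ra m i) j = (\<Sum>k<d. sc (\<mu> i j k) (ra m k)))
   \<and> (\<forall>m. (\<Sum>k<d. sc (\<eta> k) (ra m k)) = m)
   \<and> (\<forall>i<d. \<forall>j<d. \<forall>m. ra (la i m) j = la i (ra m j))
   \<comment> \<open>bicomodule\<close>
   \<and> (\<forall>i<d. \<forall>j<d. \<forall>m. lc (lc m i) j = (\<Sum>k<d. sc (\<Delta> k i j) (lc m k)))
   \<and> (\<forall>m. (\<Sum>i<d. sc (\<epsilon> i) (lc m i)) = m)
   \<and> (\<forall>i<d. \<forall>j<d. \<forall>m. rc (rc m i) j = (\<Sum>k<d. sc (\<Delta> k j i) (rc m k)))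
   \<and> (\<forall>m. (\<Sum>i<d. sc (\<epsilon> i) (rc m i)) = m)
   \<and> (\<forall>i<d. \<forall>j<d. \<forall>m. lc (rc m i) j = rc (lc m j) i)
   \<comment> \<open>coactions are bimodule maps\<close>
   \<and> (\<forall>i<d. \<forall>t<d. \<forall>m. lc (la i m) t = (\<Sum>j<d. \<Sum>k<d. \<Sum>l<d. sc (\<Delta> i j k * \<mu> j l t) (la k (lc m l))))
   \<and> (\<forall>i<d. \<forall>t<d. \<forall>m. lc (ra m i) t = (\<Sum>j<d. \<Sum>k<d. \<Sum>l<d. sc (\<Delta> i j k * \<mu> l j t) (ra (lc m l) k)))
   \<and> (\<forall>i<d. \<forall>t<d. \<forall>m. rc (la i m) t = (\<Sum>j<d. \<Sum>k<d. \<Sum>l<d. sc (\<Delta> i j k * \<mu> k l t) (la j (rc m l))))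
   \<and> (\<forall>i<d. \<forall>t<d. \<forall>m. rc (ra m i) t = (\<Sum>j<d. \<Sum>k<d. \<Sum>l<d. sc (\<Delta> i j k * \<mu> l k t) (ra (rc m l) j))))"

definition idx :: "nat \<Rightarrow> nat \<Rightarrow> nat list set" where
  "idx d p = {xs. length xs = p \<and> set xs \<subseteq> {..<d}}"

text \<open>coefficient of b_js in Delta^(u)(b_i), u = length js - 1 (Delta^(-1) = eps, Delta^(0) = id)\<close>
fun itc :: "'k::field hopf \<Rightarrow> nat \<Rightarrow> nat list \<Rightarrow> 'k" where
  "itc H i [] = heps H i"
| "itc H i [j] = kdelta i j"
| "itc H i (j # k # js) = (\<Sum>l<hdim H. hcmu H i j l * itc H l (k # js))"

text \<open>coefficient of b_t in the product b_(ls!0) ... b_(ls!(n-1)) (empty product = 1)\<close>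
fun prodc :: "'k::field hopf \<Rightarrow> nat list \<Rightarrow> nat \<Rightarrow> 'k" where
  "prodc H [] t = heta H t"
| "prodc H (l # ls) t = (\<Sum>s<hdim H. hmu H l s t * prodc H ls s)"

text \<open>coefficient of b_es in the componentwise product b_xs b_ys in A^(x)p\<close>
definition mulc :: "'k::field hopf \<Rightarrow> nat list \<Rightarrow> nat list \<Rightarrow> nat list \<Rightarrow> 'k" where
  "mulc H xs ys es = (\<Prod>r<length es. hmu H (xs ! r) (ys ! r) (es ! r))"

text \<open>coefficient of b_js (x) b_ks in b_as^(1) (x) b_as^(2) (Delta applied factorwise)\<close>
definition dcop :: "'k::field hopf \<Rightarrow> nat list \<Rightarrow> nat list \<Rightarrow> nat list \<Rightarrow> 'k" where
  "dcop H as js ks = (\<Prod>r<length as. hcmu H (as ! r) (js ! r) (ks ! r))"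

text \<open>diagonal left action of b_i on A^(x)p (x) N, and diagonal right action\<close>
definition dla :: "'k::field hopf \<Rightarrow> ('k, 'n::ab_group_add) hbimod \<Rightarrow> nat \<Rightarrow> (nat list \<Rightarrow> 'n) \<Rightarrow> nat list \<Rightarrow> 'n" where
  "dla H N i X es = (\<Sum>js\<in>idx (hdim H) (length es + 1). \<Sum>fs\<in>idx (hdim H) (length es).
      hb_sc N (itc H i js * mulc H (butlast js) fs es) (hb_la N (last js) (X fs)))"

definition dra :: "'k::field hopf \<Rightarrow> ('k, 'n::ab_group_add) hbimod \<Rightarrow> (nat list \<Rightarrow> 'n) \<Rightarrow> nat \<Rightarrow> nat list \<Rightarrow> 'n" where
  "dra H N X i es = (\<Sum>js\<in>idx (hdim H) (length es + 1). \<Sum>fs\<in>idx (hdim H) (length es).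
      hb_sc N (itc H i js * mulc H fs (butlast js) es) (hb_ra N (X fs) (last js)))"

text \<open>the component with q source and p target A-factors lies in Hom_{A-}^{-A}(M (x) A^q, A^p (x) N)\<close>
definition hom_comp :: "'k::field hopf \<Rightarrow> ('k, 'm::ab_group_add) hbimod \<Rightarrow> ('k, 'n::ab_group_add) hbimod
     \<Rightarrow> ('m \<Rightarrow> nat list \<Rightarrow> nat list \<Rightarrow> 'n) \<Rightarrow> nat \<Rightarrow> nat \<Rightarrow> bool" where
  "hom_comp H M N \<phi> q p \<longleftrightarrow> (let d = hdim H in
     \<forall>as\<in>idx d q. \<forall>es\<in>idx d p.
       klin (hb_sc M) (hb_sc N) (\<lambda>m. \<phi> m as es)
     \<and> (\<forall>i<d. \<forall>m. \<phi> (hb_la M i m) as es = dla H N i (\<phi> m as) es)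
     \<and> (\<forall>t<d. \<forall>m. hb_rc N (\<phi> m as es) t =
          (\<Sum>l<d. \<Sum>js\<in>idx d q. \<Sum>ks\<in>idx d q.
             hb_sc N (dcop H as js ks * prodc H (l # ks) t) (\<phi> (hb_rc M m l) js es))))"

definition is_cochain :: "'k::field hopf \<Rightarrow> ('k, 'm::ab_group_add) hbimod \<Rightarrow> ('k, 'n::ab_group_add) hbimod
     \<Rightarrow> nat \<Rightarrow> ('m \<Rightarrow> nat list \<Rightarrow> nat list \<Rightarrow> 'n) \<Rightarrow> bool" where
  "is_cochain H M N n \<phi> \<longleftrightarrow> (\<forall>t\<le>n. hom_comp H M N \<phi> (n - t) t)"

text \<open>horizontal differential d_h (evaluated at m (x) b_as, as of length q+1 \<ge> 1)\<close>
definition dh :: "'k::field hopf \<Rightarrow> ('k, 'm::ab_group_add) hbimod \<Rightarrow> ('k, 'n::ab_group_add) hbimod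
     \<Rightarrow> ('m \<Rightarrow> nat list \<Rightarrow> nat list \<Rightarrow> 'n) \<Rightarrow> 'm \<Rightarrow> nat list \<Rightarrow> nat list \<Rightarrow> 'n" where
  "dh H M N \<phi> m as es = (let d = hdim H; q = length as - 1 in
      \<phi> (hb_ra M m (hd as)) (tl as) es
    + (\<Sum>i\<in>{1..q}. hb_sc N ((-1) ^ i)
         (\<Sum>s<d. hb_sc N (hmu H (as ! (i - 1)) (as ! i) s) (\<phi> m (take (i - 1) as @ s # drop (i + 1) as) es)))
    + hb_sc N ((-1) ^ (q + 1)) (dra H N (\<phi> m (butlast as)) (last as) es))"

text \<open>vertical differential d_c (evaluated at m (x) b_as, result coefficient at b_es, es of length p+1 \<ge> 1)\<close>
definition dc :: "'k::field hopf \<Rightarrow> ('k, 'm::ab_group_add) hbimod \<Rightarrow> ('k, 'n::ab_group_add) hbimod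
     \<Rightarrow> ('m \<Rightarrow> nat list \<Rightarrow> nat list \<Rightarrow> 'n) \<Rightarrow> 'm \<Rightarrow> nat list \<Rightarrow> nat list \<Rightarrow> 'n" where
  "dc H M N \<phi> m as es = (let d = hdim H; q = length as; p = length es - 1 in
     hb_sc N ((-1) ^ q)
      ((\<Sum>l<d. \<Sum>js\<in>idx d q. \<Sum>ks\<in>idx d q.
          hb_sc N (dcop H as js ks * prodc H (l # js) (hd es)) (\<phi> (hb_lc M m l) ks (tl es)))
     + (\<Sum>i\<in>{1..p}. hb_sc N ((-1) ^ i)
          (\<Sum>s<d. hb_sc N (hcmu H s (es ! (i - 1)) (es ! i)) (\<phi> m as (take (i - 1) es @ s # drop (i + 1) es))))
     + hb_sc N ((-1) ^ (p + 1)) (hb_lc N (\<phi> m as (butlast es)) (last es))))"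

definition Dtot :: "'k::field hopf \<Rightarrow> ('k, 'm::ab_group_add) hbimod \<Rightarrow> ('k, 'n::ab_group_add) hbimod
     \<Rightarrow> ('m \<Rightarrow> nat list \<Rightarrow> nat list \<Rightarrow> 'n) \<Rightarrow> 'm \<Rightarrow> nat list \<Rightarrow> nat list \<Rightarrow> 'n" where
  "Dtot H M N \<phi> m as es =
     (if as = [] then 0 else dh H M N \<phi> m as es) + (if es = [] then 0 else dc H M N \<phi> m as es)"

definition is_cocycle :: "'k::field hopf \<Rightarrow> ('k, 'm::ab_group_add) hbimod \<Rightarrow> ('k, 'n::ab_group_add) hbimod
     \<Rightarrow> nat \<Rightarrow> ('m \<Rightarrow> nat list \<Rightarrow> nat list \<Rightarrow> 'n) \<Rightarrow> bool" where
  "is_cocycle H M N n \<phi> \<longleftrightarrow> is_cochain H M N n \<phi> \<and>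
     (\<forall>m as es. set as \<subseteq> {..<hdim H} \<and> set es \<subseteq> {..<hdim H} \<and> length as + length es = n + 1
        \<longrightarrow> Dtot H M N \<phi> m as es = 0)"

text \<open>cup product of a p-cochain f (M to L) and a q-cochain g (L to N); a (p+q)-cochain from M to N
  (set to 0 at index data not describing a basis tensor of the right degree)\<close>
definition cup :: "'k::field hopf \<Rightarrow> ('k, 'n::ab_group_add) hbimod \<Rightarrow> nat \<Rightarrow> nat
     \<Rightarrow> ('m \<Rightarrow> nat list \<Rightarrow> nat list \<Rightarrow> 'l) \<Rightarrow> ('l \<Rightarrow> nat list \<Rightarrow> nat list \<Rightarrow> 'n)
     \<Rightarrow> 'm \<Rightarrow> nat list \<Rightarrow> nat list \<Rightarrow> 'n" where
  "cup H N p q f g m as es =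
    (let d = hdim H; t = length es in
     if set as \<subseteq> {..<d} \<and> set es \<subseteq> {..<d} \<and> length as + t = p + q then
       (\<Sum>s\<in>{s. s \<le> p \<and> s \<le> t \<and> t - s \<le> q}.
          (let r = t - s; as1 = take (p - s) as; as2 = drop (p - s) as;
               es1 = take s es; es2 = drop s es in
           hb_sc N ((-1) ^ (s * (q - r)))
             (\<Sum>fs\<in>idx d s. \<Sum>js\<in>idx d (q - r). \<Sum>ks\<in>idx d (q - r). \<Sum>u<d. \<Sum>vs\<in>idx d s.
                hb_sc N (dcop H as2 js ks * prodc H js u * itc H u vs * mulc H fs vs es1)
                  (g (f m as1 fs) ks es2))))
     else 0)"

end

theory Submission
  imports Defs
begin

lemma finite_idx: "finite (idx d n)"
proof -
  have "idx d n = {xs. set xs \<subseteq> {..<d} \<and> length xs = n}" by (auto simp: idx_def)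
  then show ?thesis using finite_lists_length_eq[of "{..<d}" n] by simp
qed

lemma hopf_unit_r:
  assumes "is_hopf H" "i < hdim H" "t < hdim H"
  shows "(\<Sum>k<hdim H. heta H k * hmu H i k t) = kdelta i t"
proof -
  have "\<forall>i<hdim H. \<forall>t<hdim H. (\<Sum>k<hdim H. heta H k * hmu H k i t) = kdelta i t \<and> (\<Sum>k<hdim H. heta H k * hmu H i k t) = kdelta i t"
    using assms(1) unfolding is_hopf_def Let_def by (rule conjunct1[OF conjunct2])
  then show ?thesis using assms(2,3) by simp
qed

lemma hopf_eta_cmu:
  assumes "is_hopf H" "a < hdim H" "b < hdim H"
  shows "(\<Sum>k<hdim H. heta H k * hcmu H k a b) = heta H a * heta H b"
proof -
  have "\<forall>a<hdim H. \<forall>b<hdim H. (\<Sum>k<hdim H. heta H k * hcmu H k a b) = heta H a * heta H b"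
    using assms(1) unfolding is_hopf_def Let_def
    by (rule conjunct1[OF conjunct2[OF conjunct2[OF conjunct2[OF conjunct2[OF conjunct2]]]]])
  then show ?thesis using assms(2,3) by simp
qed

lemma hopf_eta_eps:
  assumes "is_hopf H"
  shows "(\<Sum>k<hdim H. heta H k * heps H k) = 1"
  using assms(1) unfolding is_hopf_def Let_def
  by (rule conjunct1[OF conjunct2[OF conjunct2[OF conjunct2[OF conjunct2[OF conjunct2[OF conjunct2[OF conjunct2]]]]]]])

lemma itc_eta:
  assumes "is_hopf H"
  shows "set vs \<subseteq> {..<hdim H} \<Longrightarrow>
    (\<Sum>u<hdim H. heta H u * itc H u vs) = (\<Prod>r<length vs. heta H (vs ! r))"
proof (induction vs rule: induct_list012)
  case 1
  then show ?case using hopf_eta_eps[OF assms] by simp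
next
  case (2 x)
  then show ?case by (simp add: kdelta_def if_distrib cong: if_cong)
next
  case (3 x y zs)
  let ?d = "hdim H"
  have "(\<Sum>u<?d. heta H u * itc H u (x # y # zs))
      = (\<Sum>u<?d. \<Sum>l<?d. heta H u * hcmu H u x l * itc H l (y # zs))"
    by (simp add: sum_distrib_left mult.assoc)
  also have "\<dots> = (\<Sum>l<?d. (\<Sum>u<?d. heta H u * hcmu H u x l) * itc H l (y # zs))"
    by (subst sum.swap) (simp add: sum_distrib_right)
  also have "\<dots> = (\<Sum>l<?d. heta H x * (heta H l * itc H l (y # zs)))"
    using hopf_eta_cmu[OF assms] 3(3) by (intro sum.cong) auto
  also have "\<dots> = heta H x * (\<Prod>r<length (y # zs). heta H ((y # zs) ! r))"
    using 3 by (simp add: sum_distrib_left[symmetric])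
  also have "\<dots> = (\<Prod>r<length (x # y # zs). heta H ((x # y # zs) ! r))"
    by (simp only: length_Cons prod.lessThan_Suc_shift nth_Cons_0 nth_Cons_Suc)
  finally show ?case .
qed

lemma sum_prod_idx:
  fixes g :: "nat \<Rightarrow> nat \<Rightarrow> 'a::comm_semiring_1"
  shows
  "(\<Sum>vs\<in>idx d n. (\<Prod>r<n. g r (vs ! r))) = (\<Prod>r<n. (\<Sum>v<d. g r v))"
proof (induction n arbitrary: g)
  case 0
  have "idx d 0 = {[]}" by (auto simp: idx_def)
  then show ?case by simp
next
  case (Suc n)
  have im: "idx d (Suc n) = (\<lambda>(v, vs). v # vs) ` ({..<d} \<times> idx d n)"
  proof
    show "idx d (Suc n) \<subseteq> (\<lambda>(v, vs). v # vs) ` ({..<d} \<times> idx d n)"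
    proof
      fix xs assume "xs \<in> idx d (Suc n)"
      then obtain v vs where "xs = v # vs" "v < d" "vs \<in> idx d n"
        by (cases xs) (auto simp: idx_def)
      then show "xs \<in> (\<lambda>(v, vs). v # vs) ` ({..<d} \<times> idx d n)" by force
    qed
  qed (auto simp: idx_def)
  have inj: "inj_on (\<lambda>(v, vs). v # vs) ({..<d} \<times> idx d n)"
    by (auto simp: inj_on_def)
  have "(\<Sum>vs\<in>idx d (Suc n). (\<Prod>r<Suc n. g r (vs ! r)))
      = (\<Sum>(v, vs)\<in>{..<d} \<times> idx d n. g 0 v * (\<Prod>r<n. g (Suc r) (vs ! r)))"
    by (simp only: im sum.reindex[OF inj] comp_def)
       (simp add: case_prod_beta prod.lessThan_Suc_shift del: prod.lessThan_Suc)
  also have "\<dots> = (\<Sum>v<d. g 0 v) * (\<Sum>vs\<in>idx d n. (\<Prod>r<n. g (Suc r) (vs ! r)))"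
    by (simp add: sum.cartesian_product[symmetric] sum_product)
  also have "\<dots> = (\<Prod>r<Suc n. (\<Sum>v<d. g r v))"
    by (simp add: Suc.IH[of "\<lambda>r. g (Suc r)"] prod.lessThan_Suc_shift del: prod.lessThan_Suc)
  finally show ?case .
qed

lemma nth_lt: "set xs \<subseteq> {..<d} \<Longrightarrow> i < length xs \<Longrightarrow> xs ! i < d"
  using nth_mem by fastforce

lemma prod_kdelta:
  assumes "length fs = t" "length es = t"
  shows "(\<Prod>r<t. kdelta (fs ! r) (es ! r) :: 'k::field) = (if fs = es then 1 else 0)"
proof (cases "fs = es")
  case True then show ?thesis by (simp add: kdelta_def)
next
  case False
  then obtain r where "r < t" "fs ! r \<noteq> es ! r" using assms nth_equalityI by metis
  then have "\<exists>a\<in>{..<t}. kdelta (fs ! a) (es ! a) = (0::'k)" by (auto simp: kdelta_def)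
  from prod_zero[OF finite_lessThan this] show ?thesis using False by simp
qed

lemma unit_coef:
  assumes "is_hopf H" "fs \<in> idx (hdim H) t" "es \<in> idx (hdim H) t"
  shows "(\<Sum>u<hdim H. \<Sum>vs\<in>idx (hdim H) t. heta H u * itc H u vs * mulc H fs vs es)
     = (if fs = es then 1 else 0)"
proof -
  let ?d = "hdim H"
  have "(\<Sum>u<?d. \<Sum>vs\<in>idx ?d t. heta H u * itc H u vs * mulc H fs vs es)
     = (\<Sum>vs\<in>idx ?d t. (\<Sum>u<?d. heta H u * itc H u vs) * mulc H fs vs es)"
    by (subst sum.swap) (simp add: sum_distrib_right)
  also have "\<dots> = (\<Sum>vs\<in>idx ?d t. (\<Prod>r<t. heta H (vs ! r) * hmu H (fs ! r) (vs ! r) (es ! r)))"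
    using assms itc_eta[OF assms(1)]
    by (intro sum.cong) (auto simp: idx_def mulc_def prod.distrib)
  also have "\<dots> = (\<Prod>r<t. (\<Sum>v<?d. heta H v * hmu H (fs ! r) v (es ! r)))"
    by (rule sum_prod_idx)
  also have "\<dots> = (\<Prod>r<t. kdelta (fs ! r) (es ! r))"
    using assms by (intro prod.cong refl hopf_unit_r) (auto simp: idx_def intro: nth_lt)
  also have "\<dots> = (if fs = es then 1 else 0)"
    using assms by (intro prod_kdelta) (auto simp: idx_def)
  finally show ?thesis .
qed

lemma cup0:
  assumes H: "is_hopf H" and P: "is_hbimod H P"
  shows "cup H P n 0 F h m as es =
    (if set as \<subseteq> {..<hdim H} \<and> set es \<subseteq> {..<hdim H} \<and> length as + length es = n
     then h (F m as es) [] [] else 0)"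
proof -
  interpret vs: vector_space "hb_sc P" using P unfolding is_hbimod_def Let_def by (rule conjunct1)
  let ?d = "hdim H" let ?t = "length es"
  show ?thesis
  proof (cases "set as \<subseteq> {..<?d} \<and> set es \<subseteq> {..<?d} \<and> length as + ?t = n")
    case False
    have G: "(set as \<subseteq> {..<?d} \<and> set es \<subseteq> {..<?d} \<and> length as + ?t = n + 0) = False"
      using False by simp
    show ?thesis unfolding cup_def Let_def G if_False using False by auto
  next
    case True
    have S: "{s. s \<le> n \<and> s \<le> ?t \<and> ?t - s \<le> 0} = {?t}" using True by auto
    have I0: "idx ?d 0 = {[]}" by (auto simp: idx_def)
    have es_idx: "es \<in> idx ?d ?t" using True by (simp add: idx_def)
    have "cup H P n 0 F h m as es =
       (\<Sum>fs\<in>idx ?d ?t. \<Sum>u<?d. \<Sum>vs\<in>idx ?d ?t.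
          hb_sc P (heta H u * itc H u vs * mulc H fs vs es) (h (F m as fs) [] []))"
    proof -
      have G: "(set as \<subseteq> {..<?d} \<and> set es \<subseteq> {..<?d} \<and> length as + ?t = n + 0) = True"
        using True by simp
      have T: "take (n - ?t) as = as" "drop (n - ?t) as = []" using True by auto
      show ?thesis unfolding cup_def Let_def G if_True S
        by (simp add: I0 dcop_def T)
    qed
    also have "\<dots> = (\<Sum>fs\<in>idx ?d ?t. hb_sc P (if fs = es then 1 else 0) (h (F m as fs) [] []))"
    proof (intro sum.cong refl)
      fix fs assume fs: "fs \<in> idx ?d ?t"
      show "(\<Sum>u<?d. \<Sum>vs\<in>idx ?d ?t.
          hb_sc P (heta H u * itc H u vs * mulc H fs vs es) (h (F m as fs) [] []))
        = hb_sc P (if fs = es then 1 else 0) (h (F m as fs) [] [])"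
        using unit_coef[OF H fs es_idx] by (simp add: vs.scale_sum_left[symmetric])
    qed
    also have "\<dots> = (\<Sum>fs\<in>idx ?d ?t. if fs = es then h (F m as fs) [] [] else 0)"
      by (intro sum.cong refl) (simp add: vs.scale_one)
    also have "\<dots> = h (F m as es) [] []"
      using es_idx by (simp add: sum.delta finite_idx)
    finally show ?thesis using True by simp
  qed
qed

theorem mainTheorem5:
  fixes H :: "'k::field hopf"
    and M :: "('k, 'm::ab_group_add) hbimod" and L :: "('k, 'l::ab_group_add) hbimod"
    and N :: "('k, 'n::ab_group_add) hbimod" and P :: "('k, 'p::ab_group_add) hbimod"
    and f :: "'m \<Rightarrow> nat list \<Rightarrow> nat list \<Rightarrow> 'l"
    and g :: "'l \<Rightarrow> nat list \<Rightarrow> nat list \<Rightarrow> 'n"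
    and h :: "'n \<Rightarrow> nat list \<Rightarrow> nat list \<Rightarrow> 'p"
    and p q :: nat
  assumes "is_hopf H"
    and "is_hbimod H M" and "is_hbimod H L" and "is_hbimod H N" and "is_hbimod H P"
    and "is_cocycle H M L p f" and "is_cocycle H L N q g" and "is_cocycle H N P 0 h"
  shows "cup H P (p + q) 0 (cup H N p q f g) h = cup H P p q f (cup H P q 0 g h)"
proof -
  note H = assms(1)
  interpret vP: vector_space "hb_sc P" using assms(5) unfolding is_hbimod_def Let_def by (rule conjunct1)
  interpret vN: vector_space "hb_sc N" using assms(4) unfolding is_hbimod_def Let_def by (rule conjunct1)
  let ?d = "hdim H"
  have I0: "[] \<in> idx ?d 0" by (simp add: idx_def)
  have kl: "klin (hb_sc N) (hb_sc P) (\<lambda>x. h x [] [])"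
  proof -
    have "is_cochain H N P 0 h" using assms(8) unfolding is_cocycle_def by (rule conjunct1)
    then have "hom_comp H N P h (0 - 0) 0" unfolding is_cochain_def by blast
    then have "\<forall>as\<in>idx ?d 0. \<forall>es\<in>idx ?d 0. klin (hb_sc N) (hb_sc P) (\<lambda>m. h m as es)"
      unfolding hom_comp_def Let_def by simp
    then show ?thesis using I0 by blast
  qed
  have add: "\<And>x y. h (x + y) [] [] = h x [] [] + h y [] []"
    using kl unfolding klin_def by blast
  have lin_sc: "\<And>c x. h (hb_sc N c x) [] [] = hb_sc P c (h x [] [])"
    using kl unfolding klin_def by blast
  have z: "h 0 [] [] = 0" using add[of 0 0] by simp
  have lin_sum: "\<And>G A. h (sum G A) [] [] = (\<Sum>a\<in>A. h (G a) [] [])"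
  proof -
    fix G :: "'a \<Rightarrow> 'n" and A :: "'a set"
    show "h (sum G A) [] [] = (\<Sum>a\<in>A. h (G a) [] [])"
      by (induction A rule: infinite_finite_induct) (simp_all add: z add)
  qed
  define G where "G = cup H P q 0 g h"
  have Gs: "\<And>l ks es2. set ks \<subseteq> {..<?d} \<Longrightarrow> set es2 \<subseteq> {..<?d} \<Longrightarrow>
      length ks + length es2 = q \<Longrightarrow> G l ks es2 = h (g l ks es2) [] []"
    unfolding G_def by (subst cup0[OF H assms(5)]) simp
  show ?thesis
    unfolding G_def[symmetric]
  proof (intro ext)
    fix m as es
    show "cup H P (p + q) 0 (cup H N p q f g) h m as es = cup H P p q f G m as es"
    proof (cases "set as \<subseteq> {..<?d} \<and> set es \<subseteq> {..<?d} \<and> length as + length es = p + q")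
      case False
      then have G1: "(set as \<subseteq> {..<?d} \<and> set es \<subseteq> {..<?d} \<and> length as + length es = p + q) = False"
        by simp
      show ?thesis
        by (simp only: cup0[OF H assms(5)] G1 if_False) (simp only: cup_def Let_def G1 if_False)
    next
      case True
      have T: "(set as \<subseteq> {..<?d} \<and> set es \<subseteq> {..<?d} \<and> length as + length es = p + q) = True"
        using True by simp
      have L: "cup H P (p + q) 0 (cup H N p q f g) h m as es = h (cup H N p q f g m as es) [] []"
        by (subst cup0[OF H assms(5)]) (simp only: T if_True)
      show ?thesis
        unfolding L
        apply (simp only: cup_def Let_def T if_True lin_sum lin_sc)
        apply (intro sum.cong refl arg_cong2[where f="hb_sc P"])
        apply (rule Gs[symmetric])
        using True by (auto simp: idx_def dest: in_set_dropD)
    qed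
  qed
qed

end
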